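(* Let $0\le\eta<1$, $m\in\mathbb{N}$, $n\in\mathbb{N}_0$, $m>n$. If $f_1,f_2\in\overline{S}H(m,n,\eta)$ and $0\le\mu\le1$, then $\mu f_1+(1-\mu)f_2\in\overline{S}H(m,n,\eta)$.
   Context: Fix real parameters $\alpha,\beta,\gamma,\delta>0$ and $p,q>0$ with $q\le \alpha+p$. For an integer $m\ge 0$ define $C_1(m)=1$ and, for $k\ge 2$, $$C_k(m)=\frac{(m+1)_{k-1}}{(k-1)!}\cdot\frac{\Gamma(\gamma+q(k-1))/\Gamma(\gamma)}{\Gamma(\beta+\alpha(k-1))\,\Gamma(\delta+p(k-1))/\Gamma(\delta)},$$ where $(x)_j=\Gamma(x+j)/\Gamma(x)$. For analytic $\varphi(z)=\sum_{k\ge1}c_kz^k$ on $U=\{|z|<1\}$ set $\Phi^m\varphi(z)=\sum_{k\ge1}C_k(m)c_kz^k$, and for harmonic $f=h+\overline{g}$ set $\Phi^m f=\Phi^m h+(-1)^m\overline{\Phi^m g}$. The class $SH(m,n,\eta)$ consists of harmonic $f=h+\overline g$, univalent and sense-preserving in $U$, with $h(z)=z+\sum_{k\ge2}a_kz^k$, $g(z)=\sum_{k\ge1}b_kz^k$, $|b_1|<1$, and $\operatorname{Re}\bigl(\Phi^m f/\Phi^n f\bigr)>\eta$ in $U$. The class $\overline{S}H(m,n,\eta)$ consists of those $f_m=h+\overline{g_m}\in SH(m,n,\eta)$ with $h(z)=z-\sum_{k\ge2}a_kz^k$, $g_m(z)=(-1)^{m-1}\sum_{k\ge1}b_kz^k$,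 $a_k,b_k\ge0$. *)

theory Defs
  imports "HOL-Analysis.Analysis"
begin

abbreviation unit_disc :: "complex set" where "unit_disc \<equiv> ball 0 1"

text \<open>The multiplier C_k(m), depending on the fixed parameters
  alpha beta gamma delta p q. C_0(m) := 0 (index 0 is never used, all
  coefficient sequences vanish at 0), C_1(m) = 1.\<close>
definition Ccoef :: "real \<Rightarrow> real \<Rightarrow> real \<Rightarrow> real \<Rightarrow> real \<Rightarrow> real \<Rightarrow> nat \<Rightarrow> nat \<Rightarrow> real" where
  "Ccoef \<alpha> \<beta> \<gamma> \<delta> p q m k =
     (if k = 0 then 0 else if k = 1 then 1 else
       (pochhammer (real m + 1) (k - 1) / fact (k - 1)) *
       ((Gamma (\<gamma> + q * real (k - 1)) / Gamma \<gamma>) /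
        (Gamma (\<beta> + \<alpha> * real (k - 1)) * Gamma (\<delta> + p * real (k - 1)) / Gamma \<delta>)))"

definition pser :: "(nat \<Rightarrow> complex) \<Rightarrow> complex \<Rightarrow> complex" where
  "pser c z = (\<Sum>k. c k * z ^ k)"

definition PhiA :: "real \<Rightarrow> real \<Rightarrow> real \<Rightarrow> real \<Rightarrow> real \<Rightarrow> real \<Rightarrow> nat \<Rightarrow>
    (nat \<Rightarrow> complex) \<Rightarrow> complex \<Rightarrow> complex" where
  "PhiA \<alpha> \<beta> \<gamma> \<delta> p q m c z = pser (\<lambda>k. complex_of_real (Ccoef \<alpha> \<beta> \<gamma> \<delta> p q m k) * c k) z"

definition hfun :: "(nat \<Rightarrow> complex) \<Rightarrow> (nat \<Rightarrow> complex) \<Rightarrow> complex \<Rightarrow> complex" where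
  "hfun A B z = pser A z + cnj (pser B z)"

definition PhiH :: "real \<Rightarrow> real \<Rightarrow> real \<Rightarrow> real \<Rightarrow> real \<Rightarrow> real \<Rightarrow> nat \<Rightarrow>
    (nat \<Rightarrow> complex) \<Rightarrow> (nat \<Rightarrow> complex) \<Rightarrow> complex \<Rightarrow> complex" where
  "PhiH \<alpha> \<beta> \<gamma> \<delta> p q m A B z =
     PhiA \<alpha> \<beta> \<gamma> \<delta> p q m A z + (-1) ^ m * cnj (PhiA \<alpha> \<beta> \<gamma> \<delta> p q m B z)"

definition SHc :: "real \<Rightarrow> real \<Rightarrow> real \<Rightarrow> real \<Rightarrow> real \<Rightarrow> real \<Rightarrow> nat \<Rightarrow> nat \<Rightarrow> real \<Rightarrow>
    (nat \<Rightarrow> complex) \<Rightarrow> (nat \<Rightarrow> complex) \<Rightarrow> bool" where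
  "SHc \<alpha> \<beta> \<gamma> \<delta> p q m n \<eta> A B \<longleftrightarrow>
     A 0 = 0 \<and> A 1 = 1 \<and> B 0 = 0 \<and> norm (B 1) < 1 \<and>
     (\<forall>z\<in>unit_disc. summable (\<lambda>k. A k * z ^ k) \<and> summable (\<lambda>k. B k * z ^ k)) \<and>
     (\<forall>z\<in>unit_disc. \<forall>j\<in>{m, n}.
        summable (\<lambda>k. complex_of_real (Ccoef \<alpha> \<beta> \<gamma> \<delta> p q j k) * A k * z ^ k) \<and>
        summable (\<lambda>k. complex_of_real (Ccoef \<alpha> \<beta> \<gamma> \<delta> p q j k) * B k * z ^ k)) \<and>
     inj_on (hfun A B) unit_disc \<and>
     (\<forall>z\<in>unit_disc. norm (deriv (pser B) z) < norm (deriv (pser A) z)) \<and>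
     (\<forall>z\<in>unit_disc. z \<noteq> 0 \<longrightarrow>
        Re (PhiH \<alpha> \<beta> \<gamma> \<delta> p q m A B z / PhiH \<alpha> \<beta> \<gamma> \<delta> p q n A B z) > \<eta>)"

text \<open>The class SH-bar(m,n,eta): functions F which on U equal h + conj g_m with
  h(z) = z - sum_{k>=2} a_k z^k, g_m(z) = (-1)^(m-1) sum_{k>=1} b_k z^k,
  a_k, b_k >= 0, and h + conj g_m in SH(m,n,eta).\<close>
definition SHbar :: "real \<Rightarrow> real \<Rightarrow> real \<Rightarrow> real \<Rightarrow> real \<Rightarrow> real \<Rightarrow> nat \<Rightarrow> nat \<Rightarrow> real \<Rightarrow>
    (complex \<Rightarrow> complex) \<Rightarrow> bool" where
  "SHbar \<alpha> \<beta> \<gamma> \<delta> p q m n \<eta> F \<longleftrightarrow>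
     (\<exists>a b :: nat \<Rightarrow> real. (\<forall>k. a k \<ge> 0 \<and> b k \<ge> 0) \<and>
        (let A = (\<lambda>k. if k = 1 then 1 else if k \<ge> 2 then - complex_of_real (a k) else 0);
             B = (\<lambda>k. if k \<ge> 1 then complex_of_real ((-1) ^ (m - 1) * b k) else 0)
         in SHc \<alpha> \<beta> \<gamma> \<delta> p q m n \<eta> A B \<and> (\<forall>z\<in>unit_disc. F z = hfun A B z)))"

end

theory Submission
  imports Defs
begin

definition Sr :: "(nat \<Rightarrow> real) \<Rightarrow> real \<Rightarrow> real" where
  "Sr c r = (\<Sum>k. c k * r ^ k)"
definition Sc :: "(nat \<Rightarrow> real) \<Rightarrow> complex \<Rightarrow> complex" where
  "Sc c z = (\<Sum>k. complex_of_real (c k) * z ^ k)"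
definition summ :: "(nat \<Rightarrow> real) \<Rightarrow> bool" where
  "summ c \<longleftrightarrow> (\<forall>r. 0 \<le> r \<and> r < 1 \<longrightarrow> summable (\<lambda>k. c k * r ^ k))"

lemma summ_D: "summ c \<Longrightarrow> 0 \<le> r \<Longrightarrow> r < 1 \<Longrightarrow> summable (\<lambda>k. c k * r ^ k)"
  by (simp add: summ_def)

lemma summ_lin: "summ c \<Longrightarrow> summ d \<Longrightarrow> summ (\<lambda>k. x * c k + y * d k)"
proof -
  assume c: "summ c" and d: "summ d"
  show ?thesis unfolding summ_def
  proof (intro allI impI)
    fix r :: real assume r: "0 \<le> r \<and> r < 1"
    have "summable (\<lambda>k. x * (c k * r ^ k) + y * (d k * r ^ k))"
      using summ_D[OF c] summ_D[OF d] r by (intro summable_add summable_mult) auto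
    then show "summable (\<lambda>k. (x * c k + y * d k) * r ^ k)" by (simp add: algebra_simps)
  qed
qed

lemma Sr_lin: "summ c \<Longrightarrow> summ d \<Longrightarrow> 0 \<le> r \<Longrightarrow> r < 1 \<Longrightarrow>
   Sr (\<lambda>k. x * c k + y * d k) r = x * Sr c r + y * Sr d r"
proof -
  assume c: "summ c" and d: "summ d" and r: "0 \<le> r" "r < 1"
  have "(\<lambda>k. x * (c k * r ^ k) + y * (d k * r ^ k)) sums (x * Sr c r + y * Sr d r)"
    unfolding Sr_def using summ_D[OF c r] summ_D[OF d r]
    by (intro sums_add sums_mult summable_sums)
  then show ?thesis unfolding Sr_def by (simp add: algebra_simps sums_iff)
qed

lemma summ_nonneg_abs:
  assumes "summ c" "\<And>k. 0 \<le> c k" "norm (z::'a::{real_normed_field,banach}) < 1"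
  shows "summable (\<lambda>k. of_real (c k) * z ^ k)"
proof (rule summable_norm_cancel)
  have "summable (\<lambda>k. c k * norm z ^ k)" using summ_D[OF assms(1)] assms(3) by simp
  then show "summable (\<lambda>k. norm (of_real (c k) * z ^ k))"
    using assms(2) by (simp add: norm_mult norm_power)
qed

lemma Sc_norm:
  assumes "summ c" "\<And>k. 0 \<le> c k" "norm z < 1"
  shows "norm (Sc c z) \<le> Sr c (norm z)"
proof -
  have s: "summable (\<lambda>k. c k * norm z ^ k)" using summ_D[OF assms(1)] assms(3) by simp
  have "norm (Sc c z) \<le> (\<Sum>k. norm (complex_of_real (c k) * z ^ k))"
    unfolding Sc_def by (rule summable_norm) (use s assms(2) in \<open>simp add: norm_mult norm_power\<close>)
  also have "\<dots> = Sr c (norm z)" unfolding Sr_def using assms(2) by (simp add: norm_mult norm_power)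
  finally show ?thesis .
qed

lemma Sc_real:
  assumes "summable (\<lambda>k. c k * r ^ k)"
  shows "Sc c (complex_of_real r) = complex_of_real (Sr c r)"
proof -
  have "(\<lambda>k. complex_of_real (c k * r ^ k)) sums complex_of_real (Sr c r)"
    unfolding Sr_def by (intro sums_of_real summable_sums assms)
  then show ?thesis unfolding Sc_def by (simp add: sums_iff)
qed

lemma Sc_lin:
  assumes "summ c" "summ d" "\<And>k. 0 \<le> c k" "\<And>k. 0 \<le> d k" "norm z < 1"
  shows "Sc (\<lambda>k. x * c k + y * d k) z = of_real x * Sc c z + of_real y * Sc d z"
proof -
  have "(\<lambda>k. of_real x * (of_real (c k) * z ^ k) + of_real y * (of_real (d k) * z ^ k)) sums (of_real x * Sc c z + of_real y * Sc d z)"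
    unfolding Sc_def using summ_nonneg_abs[OF assms(1,3,5)] summ_nonneg_abs[OF assms(2,4,5)]
    by (intro sums_add sums_mult summable_sums)
  then show ?thesis unfolding Sc_def by (simp add: algebra_simps sums_iff)
qed


lemma summ_diffs:
  assumes "summ c" "\<And>k. 0 \<le> c k"
  shows "summ (diffs c)"
  unfolding summ_def
proof (intro allI impI)
  fix r :: real assume r: "0 \<le> r \<and> r < 1"
  have "summable (\<lambda>n. diffs c n * r ^ n)"
  proof (rule termdiff_converges[where K=1])
    show "norm r < 1" using r by simp
    fix x :: real assume "norm x < 1"
    then show "summable (\<lambda>n. c n * x ^ n)" using summ_nonneg_abs[OF assms, of x] by simp
  qed
  then show "summable (\<lambda>k. diffs c k * r ^ k)" .
qed

lemma diffs_nonneg: fixes c :: "nat \<Rightarrow> real" assumes "\<And>k. 0 \<le> c k" shows "0 \<le> diffs c k"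
  using assms[of "Suc k"] by (simp add: diffs_def)

lemma diffs_of_real: "diffs (\<lambda>k. complex_of_real (c k)) = (\<lambda>k. complex_of_real (diffs c k))"
  by (rule ext) (simp add: diffs_def)

lemma Sc_deriv:
  assumes "summ c" "\<And>k. 0 \<le> c k" "norm z < 1"
  shows "(Sc c has_field_derivative Sc (diffs c) z) (at z)"
proof -
  have "((\<lambda>z. \<Sum>n. complex_of_real (c n) * z^n) has_field_derivative
        (\<Sum>n. diffs (\<lambda>k. complex_of_real (c k)) n * z^n)) (at z)"
    by (rule termdiffs_strong'[where K=1]) (use summ_nonneg_abs[OF assms(1,2)] assms(3) in auto)
  then show ?thesis unfolding Sc_def[abs_def] diffs_of_real by simp
qed

lemma pser_form:
  assumes "\<And>k. A k = e * (if k = 1 then 1 else 0) + w * complex_of_real (c k)"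
    and "summable (\<lambda>k. complex_of_real (c k) * z ^ k)"
  shows "pser A z = e * z + w * Sc c z" "summable (\<lambda>k. A k * z ^ k)"
proof -
  have "(\<lambda>k. (if k = 1 then e * z ^ k else 0) + w * (complex_of_real (c k) * z ^ k)) sums (e * z ^ 1 + w * Sc c z)"
    unfolding Sc_def by (intro sums_add sums_mult summable_sums assms(2) sums_single)
  moreover have "(\<lambda>k. (if k = 1 then e * z ^ k else 0) + w * (complex_of_real (c k) * z ^ k)) = (\<lambda>k. A k * z ^ k)"
    by (rule ext) (simp add: assms(1) algebra_simps)
  ultimately have "(\<lambda>k. A k * z ^ k) sums (e * z + w * Sc c z)" by simp
  then show "pser A z = e * z + w * Sc c z" "summable (\<lambda>k. A k * z ^ k)"
    unfolding pser_def by (auto simp: sums_iff)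
qed

lemma pser_form_rev:
  assumes "\<And>k. A k = e * (if k = 1 then 1 else 0) + w * complex_of_real (c k)" "w \<noteq> 0"
    and "summable (\<lambda>k. A k * complex_of_real r ^ k)"
  shows "summable (\<lambda>k. c k * r ^ k)"
proof -
  have "summable (\<lambda>k. (1 / w) * (A k * complex_of_real r ^ k - (if k = 1 then e * complex_of_real r ^ k else 0)))"
    by (intro summable_mult summable_diff assms(3)) simp
  moreover have "(\<lambda>k. (1 / w) * (A k * complex_of_real r ^ k - (if k = 1 then e * complex_of_real r ^ k else 0)))
     = (\<lambda>k. complex_of_real (c k * r ^ k))"
    by (rule ext) (simp add: assms(1,2) field_simps)
  ultimately have "summable (\<lambda>k. complex_of_real (c k * r ^ k))" by (simp only:)
  then show ?thesis by (simp only: summable_complex_of_real)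
qed

lemma Ccoef_0 [simp]: "Ccoef \<alpha> \<beta> \<gamma> \<delta> p q j 0 = 0" by (simp add: Ccoef_def)
lemma Ccoef_1 [simp]: "Ccoef \<alpha> \<beta> \<gamma> \<delta> p q j 1 = 1" by (simp add: Ccoef_def)
lemma Ccoef_Suc0 [simp]: "Ccoef \<alpha> \<beta> \<gamma> \<delta> p q j (Suc 0) = 1" by (simp add: Ccoef_def)

lemma Ccoef_mono:
  assumes "\<alpha> > 0" "\<beta> > 0" "\<gamma> > 0" "\<delta> > 0" "p > 0" "q > 0" "n \<le> m"
  shows "0 \<le> Ccoef \<alpha> \<beta> \<gamma> \<delta> p q n k \<and> Ccoef \<alpha> \<beta> \<gamma> \<delta> p q n k \<le> Ccoef \<alpha> \<beta> \<gamma> \<delta> p q m k"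
proof (cases "k \<le> 1")
  case True then show ?thesis by (cases k) (auto simp: Ccoef_def)
next
  case False
  define G where "G = ((Gamma (\<gamma> + q * real (k - 1)) / Gamma \<gamma>) /
        (Gamma (\<beta> + \<alpha> * real (k - 1)) * Gamma (\<delta> + p * real (k - 1)) / Gamma \<delta>))"
  have G: "G > 0" unfolding G_def using assms
    by (intro divide_pos_pos mult_pos_pos Gamma_real_pos add_pos_nonneg) auto
  have P: "0 \<le> pochhammer (real n + 1) (k - 1) \<and> pochhammer (real n + 1) (k - 1) \<le> pochhammer (real m + 1) (k - 1)"
    unfolding pochhammer_prod using assms(7)
    by (auto intro!: prod_nonneg prod_mono)
  have eq: "\<And>j. Ccoef \<alpha> \<beta> \<gamma> \<delta> p q j k = pochhammer (real j + 1) (k - 1) / fact (k - 1) * G"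
    using False by (simp add: Ccoef_def G_def)
  show ?thesis unfolding eq using P G
    by (auto intro!: mult_nonneg_nonneg mult_right_mono divide_right_mono)
qed


lemma bridge:
  fixes a b cj :: "nat \<Rightarrow> real" and A B :: "nat \<Rightarrow> complex" and s :: real
  assumes A: "A = (\<lambda>k. if k = 1 then 1 else if k \<ge> 2 then - complex_of_real (a k) else 0)"
    and B: "B = (\<lambda>k. if k \<ge> 1 then complex_of_real (s * b k) else 0)"
    and nna: "\<And>k. 0 \<le> a k" and nnb: "\<And>k. 0 \<le> b k"
    and al: "al = (\<lambda>k. if 2 \<le> k then a k else 0)" and be: "be = (\<lambda>k. if 1 \<le> k then b k else 0)"
    and cj1: "cj 1 = 1" and cjnn: "\<And>k. 0 \<le> cj k"
    and sa: "summ al" and sb: "summ be" and sca: "summ (\<lambda>k. cj k * al k)" and scb: "summ (\<lambda>k. cj k * be k)"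
    and z: "norm z < 1"
  shows "pser A z = z - Sc al z" "pser B z = of_real s * Sc be z"
    "pser (\<lambda>k. of_real (cj k) * A k) z = z - Sc (\<lambda>k. cj k * al k) z"
    "pser (\<lambda>k. of_real (cj k) * B k) z = of_real s * Sc (\<lambda>k. cj k * be k) z"
    "summable (\<lambda>k. A k * z ^ k)" "summable (\<lambda>k. B k * z ^ k)"
    "summable (\<lambda>k. of_real (cj k) * A k * z ^ k)" "summable (\<lambda>k. of_real (cj k) * B k * z ^ k)"
    "deriv (pser A) z = 1 - Sc (diffs al) z" "deriv (pser B) z = of_real s * Sc (diffs be) z"
proof -
  have alnn: "\<And>k. 0 \<le> al k" and benn: "\<And>k. 0 \<le> be k" using nna nnb by (auto simp: al be)
  have cA: "\<And>k. A k = 1 * (if k = 1 then 1 else 0) + (-1) * complex_of_real (al k)"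
    by (auto simp: A al)
  have cB: "\<And>k. B k = 0 * (if k = 1 then 1 else 0) + of_real s * complex_of_real (be k)"
    by (auto simp: B be)
  have cCA: "\<And>k. of_real (cj k) * A k = 1 * (if k = 1 then 1 else 0) + (-1) * complex_of_real (cj k * al k)"
    using cj1 by (auto simp: A al One_nat_def)
  have cCB: "\<And>k. of_real (cj k) * B k = 0 * (if k = 1 then 1 else 0) + of_real s * complex_of_real (cj k * be k)"
    by (cases "k = 0") (simp_all add: B be)
  have SA: "\<And>w. norm w < 1 \<Longrightarrow> summable (\<lambda>k. complex_of_real (al k) * w ^ k)"
    by (rule summ_nonneg_abs[OF sa alnn])
  have SB: "\<And>w. norm w < 1 \<Longrightarrow> summable (\<lambda>k. complex_of_real (be k) * w ^ k)"
    by (rule summ_nonneg_abs[OF sb benn])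
  have SCA: "summable (\<lambda>k. complex_of_real (cj k * al k) * z ^ k)"
    by (rule summ_nonneg_abs[OF sca _ z]) (simp add: alnn cjnn)
  have SCB: "summable (\<lambda>k. complex_of_real (cj k * be k) * z ^ k)"
    by (rule summ_nonneg_abs[OF scb _ z]) (simp add: benn cjnn)
  have pA: "\<And>w. norm w < 1 \<Longrightarrow> pser A w = w - Sc al w"
    using pser_form(1)[OF cA SA] by simp
  have pB: "\<And>w. norm w < 1 \<Longrightarrow> pser B w = of_real s * Sc be w"
    using pser_form(1)[OF cB SB] by simp
  show "pser A z = z - Sc al z" "pser B z = of_real s * Sc be z" using pA pB z by auto
  show "pser (\<lambda>k. of_real (cj k) * A k) z = z - Sc (\<lambda>k. cj k * al k) z"
    using pser_form(1)[OF cCA SCA] by simp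
  show "pser (\<lambda>k. of_real (cj k) * B k) z = of_real s * Sc (\<lambda>k. cj k * be k) z"
    using pser_form(1)[OF cCB SCB] by simp
  show "summable (\<lambda>k. A k * z ^ k)" "summable (\<lambda>k. B k * z ^ k)"
    using pser_form(2)[OF cA SA[OF z]] pser_form(2)[OF cB SB[OF z]] by auto
  show "summable (\<lambda>k. of_real (cj k) * A k * z ^ k)" "summable (\<lambda>k. of_real (cj k) * B k * z ^ k)"
    using pser_form(2)[OF cCA SCA] pser_form(2)[OF cCB SCB] by auto
  have dA: "((\<lambda>w. w - Sc al w) has_field_derivative (1 - Sc (diffs al) z)) (at z)"
    using DERIV_diff[OF DERIV_ident Sc_deriv[OF sa alnn z]] by simp
  have "(pser A has_field_derivative (1 - Sc (diffs al) z)) (at z)"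
    by (rule has_field_derivative_transform_within_open[OF dA, of "ball 0 1"]) (use z pA in auto)
  then show "deriv (pser A) z = 1 - Sc (diffs al) z" by (rule DERIV_imp_deriv)
  have dB: "((\<lambda>w. of_real s * Sc be w) has_field_derivative (of_real s * Sc (diffs be) z)) (at z)"
    using DERIV_cmult[OF Sc_deriv[OF sb benn z], of "of_real s"] by simp
  have "(pser B has_field_derivative (of_real s * Sc (diffs be) z)) (at z)"
    by (rule has_field_derivative_transform_within_open[OF dB, of "ball 0 1"]) (use z pB in auto)
  then show "deriv (pser B) z = of_real s * Sc (diffs be) z" by (rule DERIV_imp_deriv)
qed


lemma Sr_zero: "Sr c 0 = c 0"
  unfolding Sr_def by (rule powser_zero)

lemma isCont_Sr:
  assumes "summ c" "0 \<le> x" "x < 1"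
  shows "isCont (Sr c) x"
proof -
  have "summable (\<lambda>n. c n * ((x + 1) / 2) ^ n)" using summ_D[OF assms(1)] assms(2,3) by simp
  moreover have "norm x < norm ((x + 1) / 2)" using assms by simp
  ultimately show ?thesis unfolding Sr_def[abs_def] by (rule isCont_powser)
qed

lemma pos_by_IVT:
  fixes g :: "real \<Rightarrow> real"
  assumes "\<And>x. 0 \<le> x \<Longrightarrow> x < 1 \<Longrightarrow> isCont g x" "g 0 > 0"
    "\<And>x. 0 \<le> x \<Longrightarrow> x < 1 \<Longrightarrow> g x \<noteq> 0" "0 \<le> r" "r < 1"
  shows "g r > 0"
proof (rule ccontr)
  assume "\<not> g r > 0"
  then have "g r \<le> 0" by simp
  from IVT2[of g r 0 0, OF this] assms obtain x where "0 \<le> x" "x \<le> r" "g x = 0" by force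
  then show False using assms by force
qed

lemma summ_shift:
  assumes "summ c" shows "summ (\<lambda>k. c (Suc k))"
  unfolding summ_def using powser_split_head(3) summ_D[OF assms] by blast

lemma Sr_shift:
  assumes "summ c" "0 \<le> x" "x < 1"
  shows "Sr c x = c 0 + Sr (\<lambda>k. c (Suc k)) x * x"
  unfolding Sr_def by (rule powser_split_head(1)) (rule summ_D[OF assms])

lemma Sr_nonneg: "summ c \<Longrightarrow> (\<And>k. 0 \<le> c k) \<Longrightarrow> 0 \<le> x \<Longrightarrow> x < 1 \<Longrightarrow> 0 \<le> Sr c x"
  unfolding Sr_def by (intro suminf_nonneg summ_D) auto

definition Cond :: "(nat \<Rightarrow> real) \<Rightarrow> (nat \<Rightarrow> real) \<Rightarrow> real \<Rightarrow> real \<Rightarrow> (nat \<Rightarrow> real) \<Rightarrow> (nat \<Rightarrow> real) \<Rightarrow> bool" where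
  "Cond cm cn \<eta> \<tau> al be \<longleftrightarrow> (\<forall>k. 0 \<le> al k \<and> 0 \<le> be k) \<and> al 0 = 0 \<and> al 1 = 0 \<and> be 0 = 0 \<and> be 1 < 1 \<and>
    summ al \<and> summ be \<and> summ (\<lambda>k. cm k * al k) \<and> summ (\<lambda>k. cm k * be k) \<and>
    summ (\<lambda>k. cn k * al k) \<and> summ (\<lambda>k. cn k * be k) \<and>
    (\<forall>r. 0 \<le> r \<and> r < 1 \<longrightarrow> Sr (diffs al) r + Sr (diffs be) r < 1) \<and>
    (\<forall>r. 0 < r \<and> r < 1 \<longrightarrow> \<eta> * (r - Sr (\<lambda>k. cn k * al k) r + \<tau> * Sr (\<lambda>k. cn k * be k) r)
        < r - Sr (\<lambda>k. cm k * al k) r - Sr (\<lambda>k. cm k * be k) r)"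


lemma necessity:
  fixes a b :: "nat \<Rightarrow> real" and A B :: "nat \<Rightarrow> complex"
  assumes pars: "\<alpha> > 0" "\<beta> > 0" "\<gamma> > 0" "\<delta> > 0" "p > 0" "q > 0"
    and eta: "0 \<le> \<eta>" "\<eta> < 1" and mn: "m \<ge> 1" "n < m"
    and A: "A = (\<lambda>k. if k = 1 then 1 else if k \<ge> 2 then - complex_of_real (a k) else 0)"
    and B: "B = (\<lambda>k. if k \<ge> 1 then complex_of_real ((-1) ^ (m - 1) * b k) else 0)"
    and nna: "\<And>k. 0 \<le> a k" and nnb: "\<And>k. 0 \<le> b k"
    and SH: "SHc \<alpha> \<beta> \<gamma> \<delta> p q m n \<eta> A B"
  shows "Cond (Ccoef \<alpha> \<beta> \<gamma> \<delta> p q m) (Ccoef \<alpha> \<beta> \<gamma> \<delta> p q n) \<eta> ((-1) ^ n * (-1) ^ (m - 1))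
           (\<lambda>k. if 2 \<le> k then a k else 0) (\<lambda>k. if 1 \<le> k then b k else 0)"
proof -
  define cm where "cm = Ccoef \<alpha> \<beta> \<gamma> \<delta> p q m"
  define cn where "cn = Ccoef \<alpha> \<beta> \<gamma> \<delta> p q n"
  define al where "al = (\<lambda>k. if 2 \<le> k then a k else (0::real))"
  define be where "be = (\<lambda>k. if 1 \<le> k then b k else (0::real))"
  define s :: real where "s = (-1) ^ (m - 1)"
  define \<tau> :: real where "\<tau> = (-1) ^ n * (-1) ^ (m - 1)"
  have cmnn: "\<And>k. 0 \<le> cm k" and cnnn: "\<And>k. 0 \<le> cn k" and cnle: "\<And>k. cn k \<le> cm k"
    using Ccoef_mono[OF pars, of n m] Ccoef_mono[OF pars, of m m] mn by (auto simp: cm_def cn_def)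
  have alnn: "\<And>k. 0 \<le> al k" and benn: "\<And>k. 0 \<le> be k" using nna nnb by (auto simp: al_def be_def)
  have s1: "\<bar>s\<bar> = 1" by (simp add: s_def)
  have sm: "(-1) ^ m * s = -1" using mn by (cases m) (auto simp: s_def)
  have tau1: "\<bar>\<tau>\<bar> = 1" by (simp add: \<tau>_def abs_mult)
  have tau_eq: "(-1) ^ n * s = \<tau>" by (simp add: s_def \<tau>_def)
  from SH have B1: "norm (B 1) < 1"
    and S1: "\<And>z. z \<in> unit_disc \<Longrightarrow> summable (\<lambda>k. A k * z ^ k) \<and> summable (\<lambda>k. B k * z ^ k)"
    and S2: "\<And>z j. z \<in> unit_disc \<Longrightarrow> j \<in> {m, n} \<Longrightarrow>
        summable (\<lambda>k. complex_of_real (Ccoef \<alpha> \<beta> \<gamma> \<delta> p q j k) * A k * z ^ k) \<and>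
        summable (\<lambda>k. complex_of_real (Ccoef \<alpha> \<beta> \<gamma> \<delta> p q j k) * B k * z ^ k)"
    and SP: "\<And>z. z \<in> unit_disc \<Longrightarrow> norm (deriv (pser B) z) < norm (deriv (pser A) z)"
    and RE: "\<And>z. z \<in> unit_disc \<Longrightarrow> z \<noteq> 0 \<Longrightarrow>
        Re (PhiH \<alpha> \<beta> \<gamma> \<delta> p q m A B z / PhiH \<alpha> \<beta> \<gamma> \<delta> p q n A B z) > \<eta>"
    unfolding SHc_def by blast+
  have b1: "b 1 < 1" using B1 s1 nnb[of 1] by (simp add: B norm_mult norm_power)
  have cA: "\<And>k. A k = 1 * (if k = 1 then 1 else 0) + (-1) * complex_of_real (al k)"
    by (auto simp: A al_def)
  have cB: "\<And>k. B k = 0 * (if k = 1 then 1 else 0) + of_real s * complex_of_real (be k)"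
    by (auto simp: B be_def s_def)
  have cCA: "\<And>j k. of_real (Ccoef \<alpha> \<beta> \<gamma> \<delta> p q j k) * A k = 1 * (if k = 1 then 1 else 0) + (-1) * complex_of_real (Ccoef \<alpha> \<beta> \<gamma> \<delta> p q j k * al k)"
    by (auto simp: A al_def One_nat_def)
  have cCB: "\<And>j k. of_real (Ccoef \<alpha> \<beta> \<gamma> \<delta> p q j k) * B k = 0 * (if k = 1 then 1 else 0) + of_real s * complex_of_real (Ccoef \<alpha> \<beta> \<gamma> \<delta> p q j k * be k)"
    by (auto simp: B be_def s_def)
  have s0: "complex_of_real s \<noteq> 0" using s1 by auto
  have inD: "\<And>r. 0 \<le> r \<Longrightarrow> r < 1 \<Longrightarrow> complex_of_real r \<in> unit_disc" by simp
  have sal: "summ al" unfolding summ_def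
    using pser_form_rev[OF cA _ conjunct1[OF S1[OF inD]]] by auto
  have sbe: "summ be" unfolding summ_def
    using pser_form_rev[OF cB s0 conjunct2[OF S1[OF inD]]] by auto
  have scal: "\<And>j. j \<in> {m, n} \<Longrightarrow> summ (\<lambda>k. Ccoef \<alpha> \<beta> \<gamma> \<delta> p q j k * al k)" unfolding summ_def
    using pser_form_rev[OF cCA _ conjunct1[OF S2[OF inD]]] by (simp add: mult.assoc)
  have scbe: "\<And>j. j \<in> {m, n} \<Longrightarrow> summ (\<lambda>k. Ccoef \<alpha> \<beta> \<gamma> \<delta> p q j k * be k)" unfolding summ_def
    using pser_form_rev[OF cCB s0 conjunct2[OF S2[OF inD]]] by (simp add: mult.assoc)
  have sma: "summ (\<lambda>k. cm k * al k)" "summ (\<lambda>k. cn k * al k)" using scal by (auto simp: cm_def cn_def)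
  have smb: "summ (\<lambda>k. cm k * be k)" "summ (\<lambda>k. cn k * be k)" using scbe by (auto simp: cm_def cn_def)
  have cm1: "cm 1 = 1" and cn1': "cn 1 = 1" by (simp_all add: cm_def cn_def)
  note brm = bridge[OF A B[folded s_def] nna nnb al_def be_def cm1 cmnn sal sbe sma(1) smb(1), unfolded cm_def]
  note brn = bridge[OF A B[folded s_def] nna nnb al_def be_def cn1' cnnn sal sbe sma(2) smb(2), unfolded cn_def]
  have sdal: "summ (diffs al)" and sdbe: "summ (diffs be)"
    using summ_diffs[OF sal alnn] summ_diffs[OF sbe benn] by auto
  have spr: "Sr (diffs be) r < \<bar>1 - Sr (diffs al) r\<bar>" if r: "0 \<le> r" "r < 1" for r
  proof -
    have "norm (deriv (pser B) (of_real r)) < norm (deriv (pser A) (of_real r))"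
      using SP[OF inD[OF r]] .
    moreover have "deriv (pser A) (of_real r) = of_real (1 - Sr (diffs al) r)"
      using brm(9)[of "of_real r"] r Sc_real[OF summ_D[OF sdal r]] by simp
    moreover have "deriv (pser B) (of_real r) = of_real (s * Sr (diffs be) r)"
      using brm(10)[of "of_real r"] r Sc_real[OF summ_D[OF sdbe r]] by simp
    moreover have "0 \<le> Sr (diffs be) r" using Sr_nonneg[OF sdbe diffs_nonneg[OF benn] r] .
    moreover have "cmod (1 - complex_of_real (Sr (diffs al) r)) = \<bar>1 - Sr (diffs al) r\<bar>"
      by (metis norm_of_real of_real_1 of_real_diff)
    ultimately show ?thesis using s1 by (simp add: norm_mult)
  qed
  have csp: "Sr (diffs al) r + Sr (diffs be) r < 1" if r: "0 \<le> r" "r < 1" for r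
  proof -
    have "(\<lambda>x. 1 - Sr (diffs al) x) r > 0"
    proof (rule pos_by_IVT[OF _ _ _ r])
      show "isCont (\<lambda>x. 1 - Sr (diffs al) x) x" if "0 \<le> x" "x < 1" for x
        using isCont_Sr[OF sdal that] by (intro continuous_intros)
      show "0 < 1 - Sr (diffs al) 0" by (simp add: Sr_zero diffs_def al_def)
      show "1 - Sr (diffs al) x \<noteq> 0" if "0 \<le> x" "x < 1" for x
        using spr[OF that] Sr_nonneg[OF sdbe diffs_nonneg[OF benn] that] by auto
    qed
    then show ?thesis using spr[OF r] by simp
  qed
  define P where "P x = x - Sr (\<lambda>k. cm k * al k) x - Sr (\<lambda>k. cm k * be k) x" for x
  define Q where "Q x = x - Sr (\<lambda>k. cn k * al k) x + \<tau> * Sr (\<lambda>k. cn k * be k) x" for x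
  have PQ: "PhiH \<alpha> \<beta> \<gamma> \<delta> p q m A B (of_real x) = of_real (P x) \<and>
            PhiH \<alpha> \<beta> \<gamma> \<delta> p q n A B (of_real x) = of_real (Q x)" if x: "0 \<le> x" "x < 1" for x
  proof -
    have "PhiH \<alpha> \<beta> \<gamma> \<delta> p q m A B (of_real x) =
          (of_real x - of_real (Sr (\<lambda>k. cm k * al k) x)) + (-1) ^ m * cnj (of_real s * of_real (Sr (\<lambda>k. cm k * be k) x))"
      unfolding PhiH_def PhiA_def using brm(3,4)[of "of_real x"] x
        Sc_real[OF summ_D[OF sma(1) x]] Sc_real[OF summ_D[OF smb(1) x]] by (simp add: cm_def)
    also have "\<dots> = of_real (P x)" unfolding P_def using sm
      by (simp add: mult.assoc[symmetric]) (metis (no_types, lifting) of_real_1 of_real_minus of_real_mult of_real_power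
          mult_minus_left mult_1 diff_conv_add_uminus)
    finally have 1: "PhiH \<alpha> \<beta> \<gamma> \<delta> p q m A B (of_real x) = of_real (P x)" .
    have "PhiH \<alpha> \<beta> \<gamma> \<delta> p q n A B (of_real x) =
          (of_real x - of_real (Sr (\<lambda>k. cn k * al k) x)) + (-1) ^ n * cnj (of_real s * of_real (Sr (\<lambda>k. cn k * be k) x))"
      unfolding PhiH_def PhiA_def using brn(3,4)[of "of_real x"] x
        Sc_real[OF summ_D[OF sma(2) x]] Sc_real[OF summ_D[OF smb(2) x]] by (simp add: cn_def)
    also have "\<dots> = of_real (Q x)" unfolding Q_def using tau_eq
      by (simp add: mult.assoc[symmetric]) (metis of_real_1 of_real_minus of_real_mult of_real_power)
    finally show ?thesis using 1 by simp
  qed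
  have ratio: "P x / Q x > \<eta>" if x: "0 < x" "x < 1" for x
  proof -
    have "Re (PhiH \<alpha> \<beta> \<gamma> \<delta> p q m A B (of_real x) / PhiH \<alpha> \<beta> \<gamma> \<delta> p q n A B (of_real x)) > \<eta>"
      using RE[of "of_real x"] x by simp
    then show ?thesis using PQ[of x] x by (simp del: of_real_divide add: of_real_divide[symmetric])
  qed
  have Qne: "Q x \<noteq> 0" if x: "0 < x" "x < 1" for x
    using ratio[OF x] eta by auto
  define g where "g x = 1 - Sr (\<lambda>k. cn (Suc k) * al (Suc k)) x + \<tau> * Sr (\<lambda>k. cn (Suc k) * be (Suc k)) x" for x
  have Qg: "Q x = x * g x" if x: "0 \<le> x" "x < 1" for x
    unfolding Q_def g_def using Sr_shift[OF sma(2) x] Sr_shift[OF smb(2) x]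
    by (simp add: al_def be_def algebra_simps)
  have cn1: "cn 1 = 1" by (simp add: cn_def)
  have gpos: "g r > 0" if r: "0 \<le> r" "r < 1" for r
  proof (rule pos_by_IVT[OF _ _ _ r])
    show "isCont g x" if "0 \<le> x" "x < 1" for x
      unfolding g_def[abs_def]
      using isCont_Sr[OF summ_shift[OF sma(2)] that] isCont_Sr[OF summ_shift[OF smb(2)] that]
      by (intro continuous_intros) auto
    have "\<bar>\<tau> * b 1\<bar> < 1" using tau1 b1 nnb[of 1] by (simp add: abs_mult)
    then show "0 < g 0" unfolding g_def Sr_zero using cn1 by (simp add: al_def be_def)
    then show "g x \<noteq> 0" if "0 \<le> x" "x < 1" for x
      using Qne[of x] Qg[OF that] that by (cases "x = 0") auto
  qed
  have cre: "\<eta> * Q r < P r" if r: "0 < r" "r < 1" for r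
  proof -
    have "Q r > 0" using Qg[of r] gpos[of r] r by simp
    then show ?thesis using ratio[OF r] by (simp add: pos_less_divide_eq mult.commute)
  qed
  show ?thesis unfolding Cond_def cm_def[symmetric] cn_def[symmetric] al_def[symmetric] be_def[symmetric]
      \<tau>_def[symmetric]
    using alnn benn b1 sal sbe sma smb csp cre
    by (auto simp: al_def be_def P_def Q_def)
qed


lemma conv_less:
  fixes a1 a2 b1 b2 \<mu> :: real
  assumes "a1 < b1" "a2 < b2" "0 \<le> \<mu>" "\<mu> \<le> 1"
  shows "\<mu> * a1 + (1 - \<mu>) * a2 < \<mu> * b1 + (1 - \<mu>) * b2"
proof (cases "\<mu> = 0")
  case True then show ?thesis using assms by simp
next
  case False
  then have "\<mu> * a1 < \<mu> * b1" using assms by (intro mult_strict_left_mono) auto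
  moreover have "(1 - \<mu>) * a2 \<le> (1 - \<mu>) * b2" using assms by (intro mult_left_mono) auto
  ultimately show ?thesis by simp
qed

lemma Cond_convex:
  assumes C1: "Cond cm cn \<eta> \<tau> al1 be1" and C2: "Cond cm cn \<eta> \<tau> al2 be2" and mu: "0 \<le> \<mu>" "\<mu> \<le> 1"
  shows "Cond cm cn \<eta> \<tau> (\<lambda>k. \<mu> * al1 k + (1 - \<mu>) * al2 k) (\<lambda>k. \<mu> * be1 k + (1 - \<mu>) * be2 k)"
proof -
  from C1 have nn1: "\<And>k. 0 \<le> al1 k" "\<And>k. 0 \<le> be1 k" and z1: "al1 0 = 0" "al1 1 = 0" "be1 0 = 0" "be1 1 < 1"
    and s1: "summ al1" "summ be1" "summ (\<lambda>k. cm k * al1 k)" "summ (\<lambda>k. cm k * be1 k)"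
       "summ (\<lambda>k. cn k * al1 k)" "summ (\<lambda>k. cn k * be1 k)"
    and sp1: "\<And>r. 0 \<le> r \<Longrightarrow> r < 1 \<Longrightarrow> Sr (diffs al1) r + Sr (diffs be1) r < 1"
    and re1: "\<And>r. 0 < r \<Longrightarrow> r < 1 \<Longrightarrow> \<eta> * (r - Sr (\<lambda>k. cn k * al1 k) r + \<tau> * Sr (\<lambda>k. cn k * be1 k) r)
        < r - Sr (\<lambda>k. cm k * al1 k) r - Sr (\<lambda>k. cm k * be1 k) r"
    unfolding Cond_def by auto
  from C2 have nn2: "\<And>k. 0 \<le> al2 k" "\<And>k. 0 \<le> be2 k" and z2: "al2 0 = 0" "al2 1 = 0" "be2 0 = 0" "be2 1 < 1"
    and s2: "summ al2" "summ be2" "summ (\<lambda>k. cm k * al2 k)" "summ (\<lambda>k. cm k * be2 k)"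
       "summ (\<lambda>k. cn k * al2 k)" "summ (\<lambda>k. cn k * be2 k)"
    and sp2: "\<And>r. 0 \<le> r \<Longrightarrow> r < 1 \<Longrightarrow> Sr (diffs al2) r + Sr (diffs be2) r < 1"
    and re2: "\<And>r. 0 < r \<Longrightarrow> r < 1 \<Longrightarrow> \<eta> * (r - Sr (\<lambda>k. cn k * al2 k) r + \<tau> * Sr (\<lambda>k. cn k * be2 k) r)
        < r - Sr (\<lambda>k. cm k * al2 k) r - Sr (\<lambda>k. cm k * be2 k) r"
    unfolding Cond_def by auto
  have d1: "summ (diffs al1)" "summ (diffs be1)" using summ_diffs s1(1,2) nn1 by auto
  have d2: "summ (diffs al2)" "summ (diffs be2)" using summ_diffs s2(1,2) nn2 by auto
  have dlin: "\<And>c d. diffs (\<lambda>k. \<mu> * c k + (1 - \<mu>) * d k) = (\<lambda>k. \<mu> * diffs c k + (1 - \<mu>) * diffs d k)"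
    by (rule ext) (simp add: diffs_def algebra_simps)
  have clin: "\<And>c d e. (\<lambda>k. e k * (\<mu> * c k + (1 - \<mu>) * d k)) = (\<lambda>k. \<mu> * (e k * c k) + (1 - \<mu>) * (e k * d k))"
    by (rule ext) (simp add: algebra_simps)
  have nn: "\<forall>k. 0 \<le> \<mu> * al1 k + (1 - \<mu>) * al2 k \<and> 0 \<le> \<mu> * be1 k + (1 - \<mu>) * be2 k"
    using nn1 nn2 mu by (auto intro!: add_nonneg_nonneg mult_nonneg_nonneg)
  have b1: "\<mu> * be1 1 + (1 - \<mu>) * be2 1 < 1"
    using conv_less[OF z1(4) z2(4) mu] by simp
  have sm: "summ (\<lambda>k. \<mu> * al1 k + (1 - \<mu>) * al2 k)" "summ (\<lambda>k. \<mu> * be1 k + (1 - \<mu>) * be2 k)"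
    "summ (\<lambda>k. cm k * (\<mu> * al1 k + (1 - \<mu>) * al2 k))" "summ (\<lambda>k. cm k * (\<mu> * be1 k + (1 - \<mu>) * be2 k))"
    "summ (\<lambda>k. cn k * (\<mu> * al1 k + (1 - \<mu>) * al2 k))" "summ (\<lambda>k. cn k * (\<mu> * be1 k + (1 - \<mu>) * be2 k))"
    unfolding clin using summ_lin s1 s2 by auto
  have sp: "Sr (diffs (\<lambda>k. \<mu> * al1 k + (1 - \<mu>) * al2 k)) r + Sr (diffs (\<lambda>k. \<mu> * be1 k + (1 - \<mu>) * be2 k)) r < 1"
    if r: "0 \<le> r" "r < 1" for r
    unfolding dlin Sr_lin[OF d1(1) d2(1) r] Sr_lin[OF d1(2) d2(2) r]
    using conv_less[OF sp1[OF r] sp2[OF r] mu] by (simp add: algebra_simps)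
  have re: "\<eta> * (r - Sr (\<lambda>k. cn k * (\<mu> * al1 k + (1 - \<mu>) * al2 k)) r + \<tau> * Sr (\<lambda>k. cn k * (\<mu> * be1 k + (1 - \<mu>) * be2 k)) r)
        < r - Sr (\<lambda>k. cm k * (\<mu> * al1 k + (1 - \<mu>) * al2 k)) r - Sr (\<lambda>k. cm k * (\<mu> * be1 k + (1 - \<mu>) * be2 k)) r"
    if r: "0 < r" "r < 1" for r
  proof -
    have r': "0 \<le> r" "r < 1" using r by auto
    show ?thesis
      unfolding clin Sr_lin[OF s1(3) s2(3) r'] Sr_lin[OF s1(4) s2(4) r'] Sr_lin[OF s1(5) s2(5) r'] Sr_lin[OF s1(6) s2(6) r']
      using conv_less[OF re1[OF r] re2[OF r] mu] by (simp add: algebra_simps)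
  qed
  show ?thesis unfolding Cond_def using nn z1 z2 b1 sm sp re by simp
qed


lemma power_diff_bound:
  fixes z1 z2 :: complex
  assumes "norm z1 \<le> \<rho>" "norm z2 \<le> \<rho>"
  shows "norm (z1 ^ k - z2 ^ k) \<le> real k * \<rho> ^ (k - 1) * norm (z1 - z2)"
proof (cases "k = 0")
  case True then show ?thesis by simp
next
  case k: False
  show ?thesis
  proof (cases "\<rho> = 0")
    case True then show ?thesis using assms by simp
  next
    case False
    then have rp: "\<rho> > 0" using assms(1) norm_ge_zero[of z1] by linarith
    define u1 where "u1 = z1 / of_real \<rho>"
    define u2 where "u2 = z2 / of_real \<rho>"
    have u: "norm u1 \<le> 1" "norm u2 \<le> 1" using assms rp by (auto simp: u1_def u2_def norm_divide)
    have z: "z1 = of_real \<rho> * u1" "z2 = of_real \<rho> * u2" using rp by (auto simp: u1_def u2_def)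
    have "norm (z1 ^ k - z2 ^ k) = \<rho> ^ k * norm (u1 ^ k - u2 ^ k)"
      using rp by (simp add: z power_mult_distrib right_diff_distrib[symmetric] norm_mult norm_power)
    also have "\<dots> \<le> \<rho> ^ k * (real k * norm (u1 - u2))"
      using norm_power_diff[OF u, of k] rp by (intro mult_left_mono) auto
    also have "\<dots> = real k * \<rho> ^ (k - 1) * (\<rho> * norm (u1 - u2))"
      using k by (cases k) (auto simp: algebra_simps)
    also have "\<rho> * norm (u1 - u2) = norm (z1 - z2)"
      using rp by (simp add: z right_diff_distrib[symmetric] norm_mult)
    finally show ?thesis .
  qed
qed

lemma Sc_lip:
  assumes "summ c" "\<And>k. 0 \<le> c k" "norm z1 \<le> \<rho>" "norm z2 \<le> \<rho>" "\<rho> < 1"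
  shows "norm (Sc c z1 - Sc c z2) \<le> norm (z1 - z2) * Sr (diffs c) \<rho>"
proof -
  have rp: "0 \<le> \<rho>" using assms(3) norm_ge_zero[of z1] by linarith
  have n1: "norm z1 < 1" "norm z2 < 1" using assms by auto
  define h where "h k = c k * real k * \<rho> ^ (k - 1)" for k
  have "summable (\<lambda>n. diffs c n * \<rho> ^ n)" using summ_D[OF summ_diffs[OF assms(1,2)] rp assms(5)] .
  then have "(\<lambda>n. h (Suc n)) sums Sr (diffs c) \<rho>"
    unfolding Sr_def h_def by (simp add: diffs_def algebra_simps summable_sums)
  then have hs: "h sums Sr (diffs c) \<rho>" using sums_Suc_iff[of h] by (simp add: h_def)
  have bnd: "norm (complex_of_real (c k) * (z1 ^ k - z2 ^ k)) \<le> h k * norm (z1 - z2)" for k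
    using power_diff_bound[OF assms(3,4), of k] assms(2)[of k]
    by (simp add: h_def norm_mult mult.assoc mult_left_mono)
  have sh: "summable (\<lambda>k. h k * norm (z1 - z2))" using hs by (intro summable_mult2) (simp add: sums_summable)
  have sn: "summable (\<lambda>k. norm (complex_of_real (c k) * (z1 ^ k - z2 ^ k)))"
    by (rule summable_comparison_test[OF _ sh]) (use bnd in auto)
  have "Sc c z1 - Sc c z2 = (\<Sum>k. complex_of_real (c k) * (z1 ^ k - z2 ^ k))"
    unfolding Sc_def using summ_nonneg_abs[OF assms(1,2) n1(1)] summ_nonneg_abs[OF assms(1,2) n1(2)]
    by (simp add: suminf_diff right_diff_distrib)
  also have "norm \<dots> \<le> (\<Sum>k. norm (complex_of_real (c k) * (z1 ^ k - z2 ^ k)))"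
    by (rule summable_norm[OF sn])
  also have "\<dots> \<le> (\<Sum>k. h k * norm (z1 - z2))"
    by (rule suminf_le[OF bnd sn sh])
  also have "\<dots> = norm (z1 - z2) * Sr (diffs c) \<rho>"
    using hs by (simp add: suminf_mult2[symmetric] sums_iff sums_summable mult.commute)
  finally show ?thesis .
qed

lemma Sc_comb_norm:
  assumes "summ c" "summ d" "\<And>k. 0 \<le> c k" "\<And>k. 0 \<le> d k" "\<And>k. 0 \<le> x * c k + y * d k" "norm z < 1"
  shows "norm (of_real x * Sc c z + of_real y * Sc d z) \<le> x * Sr c (norm z) + y * Sr d (norm z)"
proof -
  have "norm (of_real x * Sc c z + of_real y * Sc d z) = norm (Sc (\<lambda>k. x * c k + y * d k) z)"
    using Sc_lin[OF assms(1-4,6)] by simp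
  also have "\<dots> \<le> Sr (\<lambda>k. x * c k + y * d k) (norm z)"
    by (rule Sc_norm[OF summ_lin[OF assms(1,2)] assms(5,6)])
  also have "\<dots> = x * Sr c (norm z) + y * Sr d (norm z)"
    using Sr_lin[OF assms(1,2)] assms(6) by simp
  finally show ?thesis .
qed

lemma re_from_norms:
  fixes P Q :: complex and \<eta> :: real
  assumes "norm (P - Q) < norm (P + of_real (1 - 2 * \<eta>) * Q)" "\<eta> < 1"
  shows "Re (P / Q) > \<eta>"
proof -
  have Q: "Q \<noteq> 0" using assms(1) by auto
  define w where "w = P / Q"
  have P: "P = w * Q" using Q by (simp add: w_def)
  have "norm Q * norm (w - 1) < norm Q * norm (w + of_real (1 - 2 * \<eta>))"
    using assms(1) unfolding P by (simp add: norm_mult[symmetric] algebra_simps)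
  then have "norm (w - 1) < norm (w + of_real (1 - 2 * \<eta>))" using Q by simp
  then have "(norm (w - 1))^2 < (norm (w + of_real (1 - 2 * \<eta>)))^2"
    by (intro power_strict_mono) auto
  then have "(Re w - 1)^2 + (Im w)^2 < (Re w + (1 - 2 * \<eta>))^2 + (Im w)^2"
    unfolding cmod_power2 by simp
  then have "0 < 4 * (1 - \<eta>) * (Re w - \<eta>)" by (simp add: power2_eq_square algebra_simps)
  then have "Re w - \<eta> > 0" using assms(2) by (simp add: zero_less_mult_iff)
  then show ?thesis by (simp add: w_def)
qed


lemma norm3: fixes a b c :: complex shows "norm a - norm b - norm c \<le> norm (a - b - cnj c)"
proof -
  have "norm a \<le> norm (a - b - cnj c) + norm (b + cnj c)"
    using norm_triangle_ineq[of "a - b - cnj c" "b + cnj c"] by simp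
  moreover have "norm (b + cnj c) \<le> norm b + norm c" using norm_triangle_ineq[of b "cnj c"] by simp
  ultimately show ?thesis by simp
qed

lemma norm2: fixes b c :: complex shows "norm (- b - cnj c) \<le> norm b + norm c"
  using norm_triangle_ineq[of "-b" "- cnj c"] by simp

lemma coef_nonneg:
  fixes cm cn x :: "nat \<Rightarrow> real"
  assumes "\<bar>t\<bar> \<le> 1" "0 \<le> cn k" "cn k \<le> cm k" "0 \<le> x k"
  shows "0 \<le> 1 * (cm k * x k) + t * (cn k * x k)"
proof -
  have "- (cn k * x k) \<le> t * (cn k * x k)"
  proof -
    have "-1 \<le> t" using assms(1) by linarith
    moreover have "0 \<le> cn k * x k" using assms by simp
    ultimately have "(-1) * (cn k * x k) \<le> t * (cn k * x k)" by (rule mult_right_mono)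
    then show ?thesis by simp
  qed
  moreover have "cn k * x k \<le> cm k * x k" using assms by (intro mult_right_mono) auto
  ultimately show ?thesis by simp
qed


lemma sufficiency:
  fixes a b :: "nat \<Rightarrow> real" and A B :: "nat \<Rightarrow> complex"
  assumes pars: "\<alpha> > 0" "\<beta> > 0" "\<gamma> > 0" "\<delta> > 0" "p > 0" "q > 0"
    and eta: "0 \<le> \<eta>" "\<eta> < 1" and mn: "m \<ge> 1" "n < m"
    and A: "A = (\<lambda>k. if k = 1 then 1 else if k \<ge> 2 then - complex_of_real (a k) else 0)"
    and B: "B = (\<lambda>k. if k \<ge> 1 then complex_of_real ((-1) ^ (m - 1) * b k) else 0)"
    and nna: "\<And>k. 0 \<le> a k" and nnb: "\<And>k. 0 \<le> b k"
    and C: "Cond (Ccoef \<alpha> \<beta> \<gamma> \<delta> p q m) (Ccoef \<alpha> \<beta> \<gamma> \<delta> p q n) \<eta> ((-1) ^ n * (-1) ^ (m - 1))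
           (\<lambda>k. if 2 \<le> k then a k else 0) (\<lambda>k. if 1 \<le> k then b k else 0)"
  shows "SHc \<alpha> \<beta> \<gamma> \<delta> p q m n \<eta> A B"
proof -
  define cm where "cm = Ccoef \<alpha> \<beta> \<gamma> \<delta> p q m"
  define cn where "cn = Ccoef \<alpha> \<beta> \<gamma> \<delta> p q n"
  define al where "al = (\<lambda>k. if 2 \<le> k then a k else (0::real))"
  define be where "be = (\<lambda>k. if 1 \<le> k then b k else (0::real))"
  define s :: real where "s = (-1) ^ (m - 1)"
  define \<tau> :: real where "\<tau> = (-1) ^ n * (-1) ^ (m - 1)"
  have cmnn: "\<And>k. 0 \<le> cm k" and cnnn: "\<And>k. 0 \<le> cn k" and cnle: "\<And>k. cn k \<le> cm k"
    using Ccoef_mono[OF pars, of n m] Ccoef_mono[OF pars, of m m] mn by (auto simp: cm_def cn_def)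
  have alnn: "\<And>k. 0 \<le> al k" and benn: "\<And>k. 0 \<le> be k" using nna nnb by (auto simp: al_def be_def)
  have s1: "\<bar>s\<bar> = 1" by (simp add: s_def)
  have sm: "(-1) ^ m * s = -1" using mn by (cases m) (auto simp: s_def)
  have tau1: "\<bar>\<tau>\<bar> = 1" by (simp add: \<tau>_def abs_mult)
  have tau_eq: "(-1) ^ n * s = \<tau>" by (simp add: s_def \<tau>_def)
  from C have b1: "be 1 < 1" and sal: "summ al" and sbe: "summ be"
    and sma: "summ (\<lambda>k. cm k * al k)" "summ (\<lambda>k. cn k * al k)"
    and smb: "summ (\<lambda>k. cm k * be k)" "summ (\<lambda>k. cn k * be k)"
    and csp: "\<And>r. 0 \<le> r \<Longrightarrow> r < 1 \<Longrightarrow> Sr (diffs al) r + Sr (diffs be) r < 1"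
    and cre: "\<And>r. 0 < r \<Longrightarrow> r < 1 \<Longrightarrow> \<eta> * (r - Sr (\<lambda>k. cn k * al k) r + \<tau> * Sr (\<lambda>k. cn k * be k) r)
        < r - Sr (\<lambda>k. cm k * al k) r - Sr (\<lambda>k. cm k * be k) r"
    unfolding Cond_def cm_def[symmetric] cn_def[symmetric] al_def[symmetric] be_def[symmetric] \<tau>_def[symmetric]
    by auto
  have cm1: "cm 1 = 1" and cn1': "cn 1 = 1" by (simp_all add: cm_def cn_def)
  note brm = bridge[OF A B[folded s_def] nna nnb al_def be_def cm1 cmnn sal sbe sma(1) smb(1), unfolded cm_def]
  note brn = bridge[OF A B[folded s_def] nna nnb al_def be_def cn1' cnnn sal sbe sma(2) smb(2), unfolded cn_def]
  have sdal: "summ (diffs al)" and sdbe: "summ (diffs be)"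
    using summ_diffs[OF sal alnn] summ_diffs[OF sbe benn] by auto
  have dalnn: "\<And>k. 0 \<le> diffs al k" and dbenn: "\<And>k. 0 \<le> diffs be k"
    using diffs_nonneg alnn benn by auto
  have inD: "\<And>z. z \<in> unit_disc \<longleftrightarrow> norm z < 1" by simp
  have part1: "A 0 = 0 \<and> A 1 = 1 \<and> B 0 = 0" by (simp add: A B)
  have part2: "norm (B 1) < 1"
    using b1 nnb[of 1] by (simp add: B be_def norm_mult norm_power)
  have part3: "\<forall>z\<in>unit_disc. summable (\<lambda>k. A k * z ^ k) \<and> summable (\<lambda>k. B k * z ^ k)"
    using brm(5,6) by auto
  have part4: "\<forall>z\<in>unit_disc. \<forall>j\<in>{m, n}.
        summable (\<lambda>k. complex_of_real (Ccoef \<alpha> \<beta> \<gamma> \<delta> p q j k) * A k * z ^ k) \<and>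
        summable (\<lambda>k. complex_of_real (Ccoef \<alpha> \<beta> \<gamma> \<delta> p q j k) * B k * z ^ k)"
    using brm(7,8) brn(7,8) by auto
  have hf: "hfun A B z = z - Sc al z + cnj (of_real s * Sc be z)" if "norm z < 1" for z
    unfolding hfun_def using brm(1,2)[OF that] by simp
  have part5: "inj_on (hfun A B) unit_disc"
  proof (rule inj_onI)
    fix z1 z2 assume z1: "z1 \<in> unit_disc" and z2: "z2 \<in> unit_disc" and eq: "hfun A B z1 = hfun A B z2"
    show "z1 = z2"
    proof (rule ccontr)
      assume ne: "z1 \<noteq> z2"
      define \<rho> where "\<rho> = max (norm z1) (norm z2)"
      have r: "norm z1 \<le> \<rho>" "norm z2 \<le> \<rho>" "\<rho> < 1" "0 \<le> \<rho>" using z1 z2 by (auto simp: \<rho>_def le_max_iff_disj)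
      have la: "norm (Sc al z1 - Sc al z2) \<le> norm (z1 - z2) * Sr (diffs al) \<rho>"
        by (rule Sc_lip[OF sal alnn r(1-3)])
      have lb: "norm (Sc be z1 - Sc be z2) \<le> norm (z1 - z2) * Sr (diffs be) \<rho>"
        by (rule Sc_lip[OF sbe benn r(1-3)])
      have "hfun A B z1 - hfun A B z2 = (z1 - z2) - (Sc al z1 - Sc al z2) - cnj (- of_real s * (Sc be z1 - Sc be z2))"
      proof -
        have n: "norm z1 < 1" "norm z2 < 1" using z1 z2 by auto
        show ?thesis unfolding hf[OF n(1)] hf[OF n(2)] by (simp add: algebra_simps)
      qed
      then have "norm (z1 - z2) - norm (Sc al z1 - Sc al z2) - norm (- of_real s * (Sc be z1 - Sc be z2))
          \<le> norm (hfun A B z1 - hfun A B z2)" using norm3 by metis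
      then have "norm (z1 - z2) - norm (z1 - z2) * Sr (diffs al) \<rho> - norm (z1 - z2) * Sr (diffs be) \<rho> \<le> 0"
        using eq la lb s1 by (simp add: norm_mult)
      moreover have "0 < norm (z1 - z2) * (1 - Sr (diffs al) \<rho> - Sr (diffs be) \<rho>)"
        using ne csp[OF r(4,3)] by simp
      ultimately show False by (simp add: algebra_simps)
    qed
  qed
  have part6: "\<forall>z\<in>unit_disc. norm (deriv (pser B) z) < norm (deriv (pser A) z)"
  proof
    fix z :: complex assume "z \<in> unit_disc"
    then have z: "norm z < 1" by simp
    have "norm (deriv (pser B) z) = norm (Sc (diffs be) z)" using brm(10)[OF z] s1 by (simp add: norm_mult)
    also have "\<dots> \<le> Sr (diffs be) (norm z)" by (rule Sc_norm[OF sdbe dbenn z])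
    also have "\<dots> < 1 - Sr (diffs al) (norm z)" using csp[of "norm z"] z by simp
    also have "\<dots> \<le> 1 - norm (Sc (diffs al) z)" using Sc_norm[OF sdal dalnn z] by simp
    also have "\<dots> \<le> norm (deriv (pser A) z)" using brm(9)[OF z] norm_triangle_ineq2[of 1 "Sc (diffs al) z"]
      by (simp add: norm_minus_commute)
    finally show "norm (deriv (pser B) z) < norm (deriv (pser A) z)" .
  qed
  have part7: "\<forall>z\<in>unit_disc. z \<noteq> 0 \<longrightarrow>
        Re (PhiH \<alpha> \<beta> \<gamma> \<delta> p q m A B z / PhiH \<alpha> \<beta> \<gamma> \<delta> p q n A B z) > \<eta>"
  proof (intro ballI impI)
    fix z :: complex assume "z \<in> unit_disc" "z \<noteq> 0"
    then have z: "norm z < 1" and z0: "z \<noteq> 0" by auto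
    define \<rho> where "\<rho> = norm z"
    have r: "0 < \<rho>" "\<rho> < 1" using z z0 by (auto simp: \<rho>_def)
    define U1 where "U1 = Sc (\<lambda>k. cm k * al k) z"
    define U2 where "U2 = Sc (\<lambda>k. cn k * al k) z"
    define V1 where "V1 = Sc (\<lambda>k. cm k * be k) z"
    define V2 where "V2 = Sc (\<lambda>k. cn k * be k) z"
    have smc: "(-1::complex) ^ m * of_real s = -1"
      using arg_cong[OF sm, of complex_of_real] by simp
    have snc: "(-1::complex) ^ n * of_real s = of_real \<tau>"
      using arg_cong[OF tau_eq, of complex_of_real] by simp
    have Pz: "PhiH \<alpha> \<beta> \<gamma> \<delta> p q m A B z = z - U1 - cnj V1"
    proof -
      have "PhiH \<alpha> \<beta> \<gamma> \<delta> p q m A B z = z - U1 + ((-1) ^ m * of_real s) * cnj V1"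
        unfolding PhiH_def PhiA_def using brm(3,4)[OF z] by (simp add: U1_def V1_def cm_def)
      then show ?thesis using smc by simp
    qed
    have Qz: "PhiH \<alpha> \<beta> \<gamma> \<delta> p q n A B z = z - U2 + of_real \<tau> * cnj V2"
    proof -
      have "PhiH \<alpha> \<beta> \<gamma> \<delta> p q n A B z = z - U2 + ((-1) ^ n * of_real s) * cnj V2"
        unfolding PhiH_def PhiA_def using brn(3,4)[OF z] by (simp add: U2_def V2_def cn_def)
      then show ?thesis using snc by simp
    qed
    have cmanI: "\<And>k. 0 \<le> cm k * al k" "\<And>k. 0 \<le> cn k * al k" using cmnn cnnn alnn by auto
    have cmbnI: "\<And>k. 0 \<le> cm k * be k" "\<And>k. 0 \<le> cn k * be k" using cmnn cnnn benn by auto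
    have e1: "1 - 2 * \<eta> \<le> 1" "-1 \<le> 1 - 2 * \<eta>" using eta by auto
    have abs1: "\<bar>-1::real\<bar> \<le> 1" "\<bar>\<tau>\<bar> \<le> 1" "\<bar>1 - 2 * \<eta>\<bar> \<le> 1" "\<bar>- \<tau> * (1 - 2 * \<eta>)\<bar> \<le> 1"
      using tau1 eta by (auto simp: abs_mult intro!: mult_le_one)
    have N1: "norm (of_real 1 * U1 + of_real (-1) * U2) \<le> 1 * Sr (\<lambda>k. cm k * al k) \<rho> + (-1) * Sr (\<lambda>k. cn k * al k) \<rho>"
      unfolding U1_def U2_def \<rho>_def
      by (rule Sc_comb_norm[OF sma cmanI _ z]) (rule coef_nonneg[OF abs1(1) cnnn cnle alnn])
    have N2: "norm (of_real 1 * V1 + of_real \<tau> * V2) \<le> 1 * Sr (\<lambda>k. cm k * be k) \<rho> + \<tau> * Sr (\<lambda>k. cn k * be k) \<rho>"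
      unfolding V1_def V2_def \<rho>_def
      by (rule Sc_comb_norm[OF smb cmbnI _ z]) (rule coef_nonneg[OF abs1(2) cnnn cnle benn])
    have N3: "norm (of_real 1 * U1 + of_real (1 - 2 * \<eta>) * U2) \<le> 1 * Sr (\<lambda>k. cm k * al k) \<rho> + (1 - 2 * \<eta>) * Sr (\<lambda>k. cn k * al k) \<rho>"
      unfolding U1_def U2_def \<rho>_def
      by (rule Sc_comb_norm[OF sma cmanI _ z]) (rule coef_nonneg[OF abs1(3) cnnn cnle alnn])
    have N4: "norm (of_real 1 * V1 + of_real (- \<tau> * (1 - 2 * \<eta>)) * V2) \<le> 1 * Sr (\<lambda>k. cm k * be k) \<rho> + (- \<tau> * (1 - 2 * \<eta>)) * Sr (\<lambda>k. cn k * be k) \<rho>"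
      unfolding V1_def V2_def \<rho>_def
      by (rule Sc_comb_norm[OF smb cmbnI _ z]) (rule coef_nonneg[OF abs1(4) cnnn cnle benn])
    define P where "P = PhiH \<alpha> \<beta> \<gamma> \<delta> p q m A B z"
    define Q where "Q = PhiH \<alpha> \<beta> \<gamma> \<delta> p q n A B z"
    have "P - Q = - (of_real 1 * U1 + of_real (-1) * U2) - cnj (of_real 1 * V1 + of_real \<tau> * V2)"
      unfolding P_def Q_def Pz Qz by (simp add: algebra_simps)
    then have X: "norm (P - Q) \<le> (Sr (\<lambda>k. cm k * al k) \<rho> - Sr (\<lambda>k. cn k * al k) \<rho>) + (Sr (\<lambda>k. cm k * be k) \<rho> + \<tau> * Sr (\<lambda>k. cn k * be k) \<rho>)"
      using norm2[of "of_real 1 * U1 + of_real (-1) * U2" "of_real 1 * V1 + of_real \<tau> * V2"] N1 N2 by simp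
    define T where "T = complex_of_real (2 * (1 - \<eta>)) * z"
    define E3 where "E3 = of_real 1 * U1 + of_real (1 - 2 * \<eta>) * U2"
    define E4 where "E4 = of_real 1 * V1 + of_real (- \<tau> * (1 - 2 * \<eta>)) * V2"
    have nT: "norm T = 2 * (1 - \<eta>) * \<rho>" unfolding T_def norm_mult norm_of_real \<rho>_def using eta by simp
    have "P + of_real (1 - 2 * \<eta>) * Q = T - E3 - cnj E4"
      unfolding P_def Q_def Pz Qz T_def E3_def E4_def by (simp add: algebra_simps)
    then have Y: "norm T - norm E3 - norm E4 \<le> norm (P + of_real (1 - 2 * \<eta>) * Q)"
      using norm3[of T E3 E4] by simp
    note N3 = N3[folded E3_def] and N4 = N4[folded E4_def]
    have "norm (P - Q) < norm (P + of_real (1 - 2 * \<eta>) * Q)"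
      using X Y nT N3 N4 cre[OF r] by (simp add: algebra_simps)
    then show "Re (PhiH \<alpha> \<beta> \<gamma> \<delta> p q m A B z / PhiH \<alpha> \<beta> \<gamma> \<delta> p q n A B z) > \<eta>"
      using re_from_norms[OF _ eta(2)] unfolding P_def Q_def by blast
  qed
  show ?thesis unfolding SHc_def using part1 part2 part3 part4 part5 part6 part7 by blast
qed


lemma hfun_form:
  fixes a b :: "nat \<Rightarrow> real" and A B :: "nat \<Rightarrow> complex"
  assumes A: "A = (\<lambda>k. if k = 1 then 1 else if k \<ge> 2 then - complex_of_real (a k) else 0)"
    and B: "B = (\<lambda>k. if k \<ge> 1 then complex_of_real (s * b k) else 0)"
    and nna: "\<And>k. 0 \<le> a k" and nnb: "\<And>k. 0 \<le> b k"
    and sa: "summ (\<lambda>k. if 2 \<le> k then a k else 0)" and sb: "summ (\<lambda>k. if 1 \<le> k then b k else 0)"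
    and z: "norm z < 1"
  shows "hfun A B z = z - Sc (\<lambda>k. if 2 \<le> k then a k else 0) z + cnj (of_real s * Sc (\<lambda>k. if 1 \<le> k then b k else 0) z)"
proof -
  have c1: "(\<lambda>k::nat. if k = 0 then 0 else (1::real)) 1 = 1" by simp
  have c2: "\<And>k. 0 \<le> (\<lambda>k::nat. if k = 0 then 0 else (1::real)) k" by simp
  have e1: "(\<lambda>k. (\<lambda>k::nat. if k = 0 then 0 else (1::real)) k * (if 2 \<le> k then a k else 0)) = (\<lambda>k. if 2 \<le> k then a k else 0)"
    by (rule ext) simp
  have e2: "(\<lambda>k. (\<lambda>k::nat. if k = 0 then 0 else (1::real)) k * (if 1 \<le> k then b k else 0)) = (\<lambda>k. if 1 \<le> k then b k else 0)"
    by (rule ext) simp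
  show ?thesis
    using bridge(1,2)[OF A B nna nnb refl refl c1 c2 sa sb sa[folded e1] sb[folded e2] z] unfolding hfun_def
    by simp
qed

theorem corollary4p3:
  fixes \<alpha> \<beta> \<gamma> \<delta> p q \<eta> \<mu> :: real and m n :: nat
    and f1 f2 :: "complex \<Rightarrow> complex"
  assumes "\<alpha> > 0" "\<beta> > 0" "\<gamma> > 0" "\<delta> > 0" "p > 0" "q > 0" "q \<le> \<alpha> + p"
    and "0 \<le> \<eta>" "\<eta> < 1" "m \<ge> 1" "m > n"
    and "SHbar \<alpha> \<beta> \<gamma> \<delta> p q m n \<eta> f1" "SHbar \<alpha> \<beta> \<gamma> \<delta> p q m n \<eta> f2"
    and "0 \<le> \<mu>" "\<mu> \<le> 1"
  shows "SHbar \<alpha> \<beta> \<gamma> \<delta> p q m n \<eta> (\<lambda>z. complex_of_real \<mu> * f1 z + complex_of_real (1 - \<mu>) * f2 z)"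
proof -
  note pars = assms(1-6) and eta = assms(8,9) and mn = assms(10,11) and mu = assms(14,15)
  define s :: real where "s = (-1) ^ (m - 1)"
  define mkA where "mkA a = (\<lambda>k. if k = 1 then 1 else if k \<ge> 2 then - complex_of_real (a k) else 0)" for a :: "nat \<Rightarrow> real"
  define mkB where "mkB b = (\<lambda>k. if k \<ge> 1 then complex_of_real ((-1) ^ (m - 1) * b k) else 0)" for b :: "nat \<Rightarrow> real"
  define al where "al a = (\<lambda>k. if 2 \<le> k then a k else (0::real))" for a :: "nat \<Rightarrow> real"
  define be where "be b = (\<lambda>k. if 1 \<le> k then b k else (0::real))" for b :: "nat \<Rightarrow> real"
  define cm where "cm = Ccoef \<alpha> \<beta> \<gamma> \<delta> p q m"
  define cn where "cn = Ccoef \<alpha> \<beta> \<gamma> \<delta> p q n"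
  define \<tau> :: real where "\<tau> = (-1) ^ n * (-1) ^ (m - 1)"
  from assms(12) obtain a1 b1 where nn1: "\<forall>k. a1 k \<ge> 0 \<and> b1 k \<ge> 0"
    and SH1: "SHc \<alpha> \<beta> \<gamma> \<delta> p q m n \<eta> (mkA a1) (mkB b1)" and F1: "\<forall>z\<in>unit_disc. f1 z = hfun (mkA a1) (mkB b1) z"
    unfolding SHbar_def Let_def mkA_def mkB_def by blast
  from assms(13) obtain a2 b2 where nn2: "\<forall>k. a2 k \<ge> 0 \<and> b2 k \<ge> 0"
    and SH2: "SHc \<alpha> \<beta> \<gamma> \<delta> p q m n \<eta> (mkA a2) (mkB b2)" and F2: "\<forall>z\<in>unit_disc. f2 z = hfun (mkA a2) (mkB b2) z"
    unfolding SHbar_def Let_def mkA_def mkB_def by blast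
  have C1: "Cond cm cn \<eta> \<tau> (al a1) (be b1)"
    using necessity[OF pars eta mn mkA_def mkB_def _ _ SH1] nn1
    by (simp add: cm_def cn_def \<tau>_def al_def be_def)
  have C2: "Cond cm cn \<eta> \<tau> (al a2) (be b2)"
    using necessity[OF pars eta mn mkA_def mkB_def _ _ SH2] nn2
    by (simp add: cm_def cn_def \<tau>_def al_def be_def)
  define a where "a k = \<mu> * a1 k + (1 - \<mu>) * a2 k" for k
  define b where "b k = \<mu> * b1 k + (1 - \<mu>) * b2 k" for k
  have nn: "\<forall>k. a k \<ge> 0 \<and> b k \<ge> 0" using nn1 nn2 mu by (auto simp: a_def b_def)
  have ala: "al a = (\<lambda>k. \<mu> * al a1 k + (1 - \<mu>) * al a2 k)" by (rule ext) (simp add: al_def a_def)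
  have beb: "be b = (\<lambda>k. \<mu> * be b1 k + (1 - \<mu>) * be b2 k)" by (rule ext) (simp add: be_def b_def)
  have C: "Cond cm cn \<eta> \<tau> (al a) (be b)" unfolding ala beb by (rule Cond_convex[OF C1 C2 mu])
  have SH: "SHc \<alpha> \<beta> \<gamma> \<delta> p q m n \<eta> (mkA a) (mkB b)"
  proof -
    have na: "\<And>k. 0 \<le> a k" and nb: "\<And>k. 0 \<le> b k" using nn by auto
    have C': "Cond (Ccoef \<alpha> \<beta> \<gamma> \<delta> p q m) (Ccoef \<alpha> \<beta> \<gamma> \<delta> p q n) \<eta> ((-1) ^ n * (-1) ^ (m - 1))
           (\<lambda>k. if 2 \<le> k then a k else 0) (\<lambda>k. if 1 \<le> k then b k else 0)"
      using C by (simp add: cm_def cn_def \<tau>_def al_def be_def)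
    show ?thesis by (rule sufficiency[OF pars eta mn mkA_def mkB_def na nb C'])
  qed
  have sumC: "\<And>al be. Cond cm cn \<eta> \<tau> al be \<Longrightarrow> summ al \<and> summ be \<and> (\<forall>k. 0 \<le> al k \<and> 0 \<le> be k)"
    unfolding Cond_def by blast
  have hf: "hfun (mkA x) (mkB y) z = z - Sc (al x) z + cnj (of_real s * Sc (be y) z)"
    if "Cond cm cn \<eta> \<tau> (al x) (be y)" "\<forall>k. x k \<ge> 0 \<and> y k \<ge> 0" "norm z < 1" for x y z
    using hfun_form[OF mkA_def mkB_def[folded s_def], of x y z]
      sumC[OF that(1)] that(2,3) unfolding al_def be_def by auto
  have G1: "\<forall>k. 0 \<le> a k \<and> 0 \<le> b k" using nn by simp
    have G2: "SHc \<alpha> \<beta> \<gamma> \<delta> p q m n \<eta> (\<lambda>k. if k = 1 then 1 else if 2 \<le> k then - complex_of_real (a k) else 0)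
     (\<lambda>k. if 1 \<le> k then complex_of_real ((- 1) ^ (m - 1) * b k) else 0)"
      using SH by (simp add: mkA_def mkB_def)
    have G3: "\<forall>z\<in>unit_disc. complex_of_real \<mu> * f1 z + complex_of_real (1 - \<mu>) * f2 z =
       hfun (\<lambda>k. if k = 1 then 1 else if 2 \<le> k then - complex_of_real (a k) else 0)
        (\<lambda>k. if 1 \<le> k then complex_of_real ((- 1) ^ (m - 1) * b k) else 0) z"
    proof
      fix z :: complex assume zD: "z \<in> unit_disc"
      then have z: "norm z < 1" by simp
      have s1: "summ (al a1)" "summ (be b1)" "\<And>k. 0 \<le> al a1 k" "\<And>k. 0 \<le> be b1 k" using sumC[OF C1] by auto
      have s2: "summ (al a2)" "summ (be b2)" "\<And>k. 0 \<le> al a2 k" "\<And>k. 0 \<le> be b2 k" using sumC[OF C2] by auto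
      have "complex_of_real \<mu> * f1 z + complex_of_real (1 - \<mu>) * f2 z
          = complex_of_real \<mu> * (z - Sc (al a1) z + cnj (of_real s * Sc (be b1) z))
            + complex_of_real (1 - \<mu>) * (z - Sc (al a2) z + cnj (of_real s * Sc (be b2) z))"
        using F1 F2 zD hf[OF C1 nn1 z] hf[OF C2 nn2 z] by simp
      also have "\<dots> = z - Sc (al a) z + cnj (of_real s * Sc (be b) z)"
        unfolding ala beb Sc_lin[OF s1(1) s2(1) s1(3) s2(3) z] Sc_lin[OF s1(2) s2(2) s1(4) s2(4) z]
        by (simp add: algebra_simps)
      also have "\<dots> = hfun (mkA a) (mkB b) z" using hf[OF C nn z] by simp
      finally show "complex_of_real \<mu> * f1 z + complex_of_real (1 - \<mu>) * f2 z =
       hfun (\<lambda>k. if k = 1 then 1 else if 2 \<le> k then - complex_of_real (a k) else 0)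
        (\<lambda>k. if 1 \<le> k then complex_of_real ((- 1) ^ (m - 1) * b k) else 0) z"
        by (simp add: mkA_def mkB_def)
    qed
  show ?thesis unfolding SHbar_def Let_def using G1 G2 G3 by blast
qed

end
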